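(* Let $X=(X_0,X_1,X_2)$ be a random element of $(\mathcal{X}_0\times\mathcal{X}_1\times\mathcal{X}_2,\mathfrak{X}_0\times\mathfrak{X}_1\times\mathfrak{X}_2)$ (countable alphabets carrying their power sets), and let $\mathcal{Y}_1,\mathcal{Y}_2$ be finite sets. Define, for $(x_0,x_1,x_2)$, \[ T_X^1(x_0,x_1,x_2)=[\mathrm{d}P_{X_0X_1X_1}:\mathrm{d}(P_{X_0X_1}P_{X_1\mid X_0})](x_0,x_1,x_1), \] \[ T_X^2(x_0,x_1,x_2)=[\mathrm{d}P_{X_0X_2X_2}:\mathrm{d}(P_{X_0X_2}P_{X_2\mid X_0})](x_0,x_2,x_2), \] \[ T_X^3(x_0,x_1,x_2)=[\mathrm{d}P_{X_0X_1X_2X_1X_2}:\mathrm{d}(P_{X_0X_1X_2}P_{X_1X_2\mid X_0})](x_0,x_1,x_2,x_1,x_2), \] and for $r>0$ let $A_r=I_{r|\mathcal{Y}_1|}\times I_{r|\mathcal{Y}_2|}\times I_{r|\mathcal{Y}_1||\mathcal{Y}_2|}\subseteq\mathbb{H}^3$, where $I_t=\{h\in\mathbb{H}:[t:1]<h<[1:0]\}$. (1) For every $r>1$ and $\epsilon>0$ there exists a pair $\varphi=(\varphi_1,\varphi_2)$ of measurable maps $\varphi_i:\mathcal{X}_i\to\mathcal{Y}_i$ such that \[ d(X\mid\varphi)\le P\{(T_X^i(X))_{i=1}^3\notin A_r\}+\tfrac{\sqrt3}{2}r^{-1/2}+\epsilon. \] (2) Conversely, every pair $\varphi=(\varphi_1,\varphi_2)$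 of measurable maps $\varphi_i:\mathcal{X}_i\to\mathcal{Y}_i$ satisfies, for all $0<r<1$, \[ d(X\mid\varphi)\ge P\{(T_X^i(X))_{i=1}^3\notin A_r\}-3r. \]
   Context: $d(X\mid\varphi)$ is the statistical distance $\sup_C|\mu(C)-\nu(C)|$ between the joint law $P_{X_0\varphi_1(X_1)\varphi_2(X_2)}$ and the product $P_{X_0}\times U_{\mathcal{Y}_1}\times U_{\mathcal{Y}_2}$, where $U_{\mathcal{Y}_i}$ is the uniform distribution on $\mathcal{Y}_i$. $P_{X_0X_1X_1}$ is the law of $(X_0,X_1,X_1)$ on $\mathcal{X}_0\times\mathcal{X}_1\times\mathcal{X}_1$, and $P_{X_0X_1}P_{X_1\mid X_0}$ is the measure on the same space given by $C\mapsto\int P_{X_1\mid X_0=x_0}(C_{(x_0,x_1)})\,P_{X_0X_1}(\mathrm{d}(x_0,x_1))$, with $P_{X_1\mid X_0}$ a (regular) conditional distribution of $X_1$ given $X_0$ (assumed to exist) and $C_{(x_0,x_1)}$ the section; the other two pairs of measures are defined analogously. The half projective line $\mathbb{H}$ is the set of rays $[r:s]=\{t(r,s):t>0\}$ for $(r,s)\in[0,\infty)^2\setminus\{(0,0)\}$, ordered by $[r_1:s_1]\le[r_2:s_2]$ iff $r_1s_2-r_2s_1\le0$ (equivalently $r_1/(r_1+s_1)\le r_2/(r_2+s_2)$), with the topology making $[r:s]\mapsto r/(r+s)$ a homeomorphism onto $[0,1]$. For finite measures $\alpha,\beta$, the likelihood ratio is $[\mathrm{d}\alpha:\mathrm{d}\beta]=[\mathrm{d}\alpha/\mathrm{d}(\alpha+\beta):\mathrm{d}\beta/\mathrm{d}(\alpha+\beta)]$,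 an $\mathbb{H}$-valued function defined $(\alpha+\beta)$-a.e. *)

theory Defs
  imports "HOL-Probability.Probability"
begin

text \<open>Half projective line H, represented through the homeomorphism
  [r:s] |-> r/(r+s) onto [0,1] (order preserving).\<close>
definition hray :: "real \<Rightarrow> real \<Rightarrow> real" where
  "hray r s = r / (r + s)"

text \<open>Likelihood ratio [d alpha : d beta] of two discrete (countable, power-set)
  finite measures, given as pmfs: the densities w.r.t. alpha+beta at a point z
  are the ratios of the point masses.\<close>
definition lratio :: "'a pmf \<Rightarrow> 'a pmf \<Rightarrow> 'a \<Rightarrow> real" where
  "lratio \<alpha> \<beta> z = hray (pmf \<alpha> z) (pmf \<beta> z)"

definition cond_law :: "('a \<times> 'u) pmf \<Rightarrow> 'a \<Rightarrow> 'u pmf" where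
  "cond_law q x0 = map_pmf snd (cond_pmf q {z. fst z = x0})"

definition dup_law :: "('a \<times> 'u) pmf \<Rightarrow> ('a \<times> 'u \<times> 'u) pmf" where
  "dup_law q = map_pmf (\<lambda>(x0, u). (x0, u, u)) q"

definition cond_prod_law :: "('a \<times> 'u) pmf \<Rightarrow> ('a \<times> 'u \<times> 'u) pmf" where
  "cond_prod_law q = bind_pmf q (\<lambda>(x0, u). map_pmf (\<lambda>u'. (x0, u, u')) (cond_law q x0))"

definition Tstat :: "('a \<times> 'u) pmf \<Rightarrow> 'a \<Rightarrow> 'u \<Rightarrow> real" where
  "Tstat q x0 u = lratio (dup_law q) (cond_prod_law q) (x0, u, u)"

definition TX1 :: "('a \<times> 'b \<times> 'c) pmf \<Rightarrow> 'a \<times> 'b \<times> 'c \<Rightarrow> real" where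
  "TX1 p x = Tstat (map_pmf (\<lambda>(x0, x1, x2). (x0, x1)) p) (fst x) (fst (snd x))"

definition TX2 :: "('a \<times> 'b \<times> 'c) pmf \<Rightarrow> 'a \<times> 'b \<times> 'c \<Rightarrow> real" where
  "TX2 p x = Tstat (map_pmf (\<lambda>(x0, x1, x2). (x0, x2)) p) (fst x) (snd (snd x))"

definition TX3 :: "('a \<times> 'b \<times> 'c) pmf \<Rightarrow> 'a \<times> 'b \<times> 'c \<Rightarrow> real" where
  "TX3 p x = Tstat p (fst x) (snd x)"

definition Iint :: "real \<Rightarrow> real set" where
  "Iint t = {h. hray t 1 < h \<and> h < hray 1 0}"

definition Aset :: "nat \<Rightarrow> nat \<Rightarrow> real \<Rightarrow> (real \<times> real \<times> real) set" where
  "Aset n1 n2 r = Iint (r * n1) \<times> Iint (r * n2) \<times> Iint (r * n1 * n2)"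

definition stat_dist :: "'a pmf \<Rightarrow> 'a pmf \<Rightarrow> real" where
  "stat_dist \<mu> \<nu> = (SUP C. \<bar>measure_pmf.prob \<mu> C - measure_pmf.prob \<nu> C\<bar>)"

definition dXphi :: "('a \<times> 'b \<times> 'c) pmf \<Rightarrow> ('b \<Rightarrow> 'y1::finite) \<Rightarrow> ('c \<Rightarrow> 'y2::finite) \<Rightarrow> real" where
  "dXphi p \<phi>1 \<phi>2 = stat_dist
     (map_pmf (\<lambda>(x0, x1, x2). (x0, \<phi>1 x1, \<phi>2 x2)) p)
     (pair_pmf (map_pmf fst p) (pair_pmf (pmf_of_set UNIV) (pmf_of_set UNIV)))"

end

theory Submission
  imports Defs
begin


lemma pmf_fst_pos:
  assumes "(x0,u) \<in> set_pmf q"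
  shows "pmf q (x0,u) \<le> pmf (map_pmf fst q) x0"
proof -
  have "pmf q (x0,u) = measure q {(x0,u)}" by (simp add: measure_pmf_single)
  also have "\<dots> \<le> measure q (fst -` {x0})" by (rule measure_pmf.finite_measure_mono) auto
  also have "\<dots> = pmf (map_pmf fst q) x0" by (simp add: pmf_map)
  finally show ?thesis .
qed

lemma pmf_cond_law:
  assumes "(x0,u) \<in> set_pmf q"
  shows "pmf (cond_law q x0) u = pmf q (x0,u) / pmf (map_pmf fst q) x0"
proof -
  let ?S = "{z. fst z = x0}"
  have ne: "set_pmf q \<inter> ?S \<noteq> {}" using assms by auto
  have inj: "inj_on snd (set_pmf (cond_pmf q ?S))" using ne by (auto simp: inj_on_def)
  have mem: "(x0,u) \<in> set_pmf (cond_pmf q ?S)" using ne assms by auto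
  have "pmf (cond_law q x0) u = pmf (map_pmf snd (cond_pmf q ?S)) (snd (x0,u))"
    by (simp add: cond_law_def)
  also have "\<dots> = pmf (cond_pmf q ?S) (x0,u)" by (rule pmf_map_inj[OF inj mem])
  also have "\<dots> = pmf q (x0,u) / measure q ?S" using pmf_cond[OF ne] by simp
  also have "measure q ?S = pmf (map_pmf fst q) x0" by (simp add: pmf_map vimage_def)
  finally show ?thesis .
qed

lemma pmf_dup_law: "pmf (dup_law q) (x0,u,u) = pmf q (x0,u)"
proof -
  have "inj (\<lambda>(x0::'a, u::'b). (x0, u, u))" by (auto simp: inj_on_def)
  from pmf_map_inj'[OF this, of q "(x0,u)"] show ?thesis by (simp add: dup_law_def)
qed

lemma pmf_cond_prod_law: "pmf (cond_prod_law q) (x0,u,u) = pmf q (x0,u) * pmf (cond_law q x0) u"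
proof -
  have eq: "(\<lambda>z. pmf (case z of (x0', u') \<Rightarrow> map_pmf (\<lambda>u''. (x0', u', u'')) (cond_law q x0')) (x0,u,u))
        = (\<lambda>z. pmf (cond_law q x0) u * indicator {(x0,u)} z)"
  proof
    fix z :: "'a \<times> 'b" obtain a b where z: "z = (a,b)" by (cases z)
    show "pmf (case z of (x0', u') \<Rightarrow> map_pmf (\<lambda>u''. (x0', u', u'')) (cond_law q x0')) (x0,u,u)
        = pmf (cond_law q x0) u * indicator {(x0,u)} z"
    proof (cases "z = (x0,u)")
      case True
      have "inj (\<lambda>u''. (x0, u, u''))" by (auto simp: inj_on_def)
      from pmf_map_inj'[OF this] True show ?thesis by simp
    next
      case False
      then have "(x0,u,u) \<notin> set_pmf (map_pmf (\<lambda>u''. (a, b, u'')) (cond_law q a))" using z by auto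
      then show ?thesis using False z by (simp add: set_pmf_eq)
    qed
  qed
  show ?thesis unfolding cond_prod_law_def pmf_bind eq
    by (simp add: measure_pmf_single mult.commute)
qed

lemma Tstat_Iint:
  assumes "(x0,u) \<in> set_pmf q" and t: "t \<ge> 0"
  shows "Tstat q x0 u \<in> Iint t \<longleftrightarrow> t * pmf q (x0,u) < pmf (map_pmf fst q) x0"
proof -
  define a where "a = pmf q (x0,u)"
  define Q where "Q = pmf (map_pmf fst q) x0"
  have a: "a > 0" using assms by (simp add: a_def pmf_positive)
  have Q: "Q \<ge> a" using pmf_fst_pos[OF assms(1)] by (simp add: a_def Q_def)
  have T: "Tstat q x0 u = Q / (Q + a)"
  proof -
    have "a / (a + a * (a / Q)) = Q / (Q + a)"
    proof -
      have "a + a * (a / Q) = a * (Q + a) / Q" using a Q by (simp add: field_simps)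
      then show ?thesis using a Q by simp
    qed
    then show ?thesis using a Q unfolding Tstat_def lratio_def pmf_dup_law pmf_cond_prod_law pmf_cond_law[OF assms(1)]
      hray_def a_def[symmetric] Q_def[symmetric] by simp
  qed
  have "Q / (Q+a) < 1" using a Q by simp
  moreover have "t / (t+1) < Q/(Q+a) \<longleftrightarrow> t * a < Q" using a Q t
    by (simp add: divide_simps) (simp add: algebra_simps)
  ultimately show ?thesis unfolding T Iint_def hray_def a_def[symmetric] Q_def[symmetric] by simp
qed

lemma stat_dist_ge: "measure_pmf.prob \<mu> C - measure_pmf.prob \<nu> C \<le> stat_dist \<mu> \<nu>"
proof -
  have "bdd_above (range (\<lambda>C. \<bar>measure_pmf.prob \<mu> C - measure_pmf.prob \<nu> C\<bar>))"
  proof (rule bdd_aboveI2)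
    fix C
    have "measure_pmf.prob \<mu> C \<le> 1" "measure_pmf.prob \<nu> C \<le> 1" "measure_pmf.prob \<mu> C \<ge> 0" "measure_pmf.prob \<nu> C \<ge> 0" by auto
    then show "\<bar>measure_pmf.prob \<mu> C - measure_pmf.prob \<nu> C\<bar> \<le> 1" by linarith
  qed
  then have "\<bar>measure_pmf.prob \<mu> C - measure_pmf.prob \<nu> C\<bar> \<le> stat_dist \<mu> \<nu>"
    unfolding stat_dist_def by (rule cSUP_upper[OF UNIV_I])
  then show ?thesis by simp
qed

lemma stat_dist_le:
  assumes "\<And>C. measure_pmf.prob \<mu> C - measure_pmf.prob \<nu> C \<le> B"
  shows "stat_dist \<mu> \<nu> \<le> B"
  unfolding stat_dist_def
proof (rule cSUP_least)
  fix C
  have c: "measure_pmf.prob \<mu> (- C) = 1 - measure_pmf.prob \<mu> C" "measure_pmf.prob \<nu> (- C) = 1 - measure_pmf.prob \<nu> C"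
    using measure_pmf.prob_compl[of C \<mu>] measure_pmf.prob_compl[of C \<nu>] by (auto simp: Compl_eq_Diff_UNIV)
  have "measure_pmf.prob \<mu> (-C) - measure_pmf.prob \<nu> (-C) \<le> B" by (rule assms)
  with assms[of C] c show "\<bar>measure_pmf.prob \<mu> C - measure_pmf.prob \<nu> C\<bar> \<le> B" by (auto simp: abs_if)
qed auto

lemma sum_pmf_le_map:
  assumes "finite S" "\<And>z. z \<in> S \<Longrightarrow> \<pi> z = w"
  shows "(\<Sum>z\<in>S. pmf p z) \<le> pmf (map_pmf \<pi> p) w"
proof -
  have "(\<Sum>z\<in>S. pmf p z) = measure p S" using assms by (simp add: measure_measure_pmf_finite)
  also have "\<dots> \<le> measure p (\<pi> -` {w})" by (rule measure_pmf.finite_measure_mono) (use assms in auto)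
  finally show ?thesis by (simp add: pmf_map)
qed

lemma card_big_atoms:
  fixes q :: "('a \<times> 'u) pmf" and x0 :: 'a
  assumes t: "t > 0"
  defines "B \<equiv> {u. (x0,u) \<in> set_pmf q \<and> pmf (map_pmf fst q) x0 \<le> t * pmf q (x0,u)}"
  shows "finite B \<and> real (card B) \<le> t"
proof -
  define Q where "Q = pmf (map_pmf fst q) x0"
  have key: "real (card S) \<le> t" if S: "finite S" "S \<subseteq> B" for S
  proof (cases "S = {}")
    case True then show ?thesis using t by simp
  next
    case False
    then obtain u where "u \<in> S" by auto
    then have "(x0,u) \<in> set_pmf q" using S by (auto simp: B_def)
    then have Qp: "Q > 0" using pmf_fst_pos[of x0 u q] by (metis Q_def pmf_positive less_le_trans)
    have "(\<Sum>u\<in>S. Q / t) \<le> (\<Sum>u\<in>S. pmf q (x0,u))"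
      by (rule sum_mono) (use S t in \<open>auto simp: B_def Q_def field_simps\<close>)
    also have "(\<Sum>u\<in>S. pmf q (x0,u)) = (\<Sum>z\<in>Pair x0 ` S. pmf q z)"
      by (simp add: sum.reindex inj_on_def)
    also have "\<dots> \<le> Q" unfolding Q_def by (rule sum_pmf_le_map) (use S in auto)
    finally have "card S * (Q / t) \<le> Q" by simp
    then show ?thesis using Qp t by (simp add: field_simps)
  qed
  have "finite B"
  proof (rule ccontr)
    assume "infinite B"
    then obtain S where "S \<subseteq> B" "finite S" "card S = nat (ceiling t) + 1"
      using infinite_arbitrarily_large by blast
    with key[of S] show False by linarith
  qed
  with key[of B] show ?thesis by simp
qed

definition q1 :: "('a \<times> 'b \<times> 'c) pmf \<Rightarrow> ('a \<times> 'b) pmf" where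
  "q1 p = map_pmf (\<lambda>(x0, x1, x2). (x0, x1)) p"
definition q2 :: "('a \<times> 'b \<times> 'c) pmf \<Rightarrow> ('a \<times> 'c) pmf" where
  "q2 p = map_pmf (\<lambda>(x0, x1, x2). (x0, x2)) p"

lemma fst_q1: "map_pmf fst (q1 p) = map_pmf fst p"
  by (simp add: q1_def pmf.map_comp o_def case_prod_beta)
lemma fst_q2: "map_pmf fst (q2 p) = map_pmf fst p"
  by (simp add: q2_def pmf.map_comp o_def case_prod_beta)

lemma inA:
  assumes x: "(x0,x1,x2) \<in> set_pmf p" and r: "r > 0"
  shows "(TX1 p (x0,x1,x2), TX2 p (x0,x1,x2), TX3 p (x0,x1,x2)) \<in> Aset n1 n2 r \<longleftrightarrow>
     (r * n1 * pmf (q1 p) (x0,x1) < pmf (map_pmf fst p) x0 \<and>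
      r * n2 * pmf (q2 p) (x0,x2) < pmf (map_pmf fst p) x0 \<and>
      r * n1 * n2 * pmf p (x0,x1,x2) < pmf (map_pmf fst p) x0)"
proof -
  have m1: "(x0,x1) \<in> set_pmf (q1 p)" using x unfolding q1_def by force
  have m2: "(x0,x2) \<in> set_pmf (q2 p)" using x unfolding q2_def by force
  have t1: "TX1 p (x0,x1,x2) = Tstat (q1 p) x0 x1" by (simp add: TX1_def q1_def)
  have t2: "TX2 p (x0,x1,x2) = Tstat (q2 p) x0 x2" by (simp add: TX2_def q2_def)
  have t3: "TX3 p (x0,x1,x2) = Tstat p x0 (x1,x2)" by (simp add: TX3_def)
  show ?thesis unfolding Aset_def t1 t2 t3 mem_Times_iff fst_conv snd_conv
    using Tstat_Iint[OF m1, of "r * n1"] Tstat_Iint[OF m2, of "r * n2"] Tstat_Iint[OF x, of "r * n1 * n2"] r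
    by (simp add: fst_q1 fst_q2)
qed

lemma uniform_pair: "pair_pmf (pmf_of_set (UNIV::'y1::finite set)) (pmf_of_set (UNIV::'y2::finite set)) = pmf_of_set UNIV"
  by (rule pmf_eqI) (auto simp: pmf_pair card_cartesian_product)

lemma part2:
  fixes p :: "('a::countable \<times> 'b::countable \<times> 'c::countable) pmf"
    and \<phi>1 :: "'b \<Rightarrow> 'y1::finite" and \<phi>2 :: "'c \<Rightarrow> 'y2::finite"
  assumes r: "r > 0"
  shows "measure_pmf.prob p {x. (TX1 p x, TX2 p x, TX3 p x) \<notin> Aset CARD('y1) CARD('y2) r} - 3 * r
    \<le> dXphi p \<phi>1 \<phi>2"
proof -
  define n1 where "n1 = CARD('y1)"
  define n2 where "n2 = CARD('y2)"
  have n1: "n1 > 0" and n2: "n2 > 0" by (auto simp: n1_def n2_def)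
  define Q where "Q x0 = pmf (map_pmf fst p) x0" for x0
  define B1 where "B1 x0 = {u. (x0,u) \<in> set_pmf (q1 p) \<and> pmf (map_pmf fst (q1 p)) x0 \<le> (r * n1) * pmf (q1 p) (x0,u)}" for x0
  define B2 where "B2 x0 = {u. (x0,u) \<in> set_pmf (q2 p) \<and> pmf (map_pmf fst (q2 p)) x0 \<le> (r * n2) * pmf (q2 p) (x0,u)}" for x0
  define B3 where "B3 x0 = {u. (x0,u) \<in> set_pmf p \<and> pmf (map_pmf fst p) x0 \<le> (r * n1 * n2) * pmf p (x0,u)}" for x0
  define S1 where "S1 x0 = \<phi>1 ` B1 x0" for x0
  define S2 where "S2 x0 = \<phi>2 ` B2 x0" for x0
  define S3 where "S3 x0 = (\<lambda>(b,c). (\<phi>1 b, \<phi>2 c)) ` B3 x0" for x0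
  define C :: "('a \<times> 'y1 \<times> 'y2) set" where "C = {(x0,y1,y2). y1 \<in> S1 x0 \<or> y2 \<in> S2 x0 \<or> (y1,y2) \<in> S3 x0}"
  define f :: "'a \<times> 'b \<times> 'c \<Rightarrow> 'a \<times> 'y1 \<times> 'y2" where "f = (\<lambda>(x0, x1, x2). (x0, \<phi>1 x1, \<phi>2 x2))"
  define A where "A = {x. (TX1 p x, TX2 p x, TX3 p x) \<notin> Aset n1 n2 r}"
  define \<nu> where "\<nu> = pair_pmf (map_pmf fst p) (pair_pmf (pmf_of_set (UNIV::'y1 set)) (pmf_of_set (UNIV::'y2 set)))"
  have c1: "finite (B1 x0) \<and> real (card (B1 x0)) \<le> r * n1" for x0
    unfolding B1_def by (rule card_big_atoms) (use r n1 in simp)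
  have c2: "finite (B2 x0) \<and> real (card (B2 x0)) \<le> r * n2" for x0
    unfolding B2_def by (rule card_big_atoms) (use r n2 in simp)
  have c3: "finite (B3 x0) \<and> real (card (B3 x0)) \<le> r * n1 * n2" for x0
    unfolding B3_def by (rule card_big_atoms) (use r n1 n2 in simp)
  have sub: "A \<subseteq> f -` C \<union> (- set_pmf p)"
  proof
    fix x assume xA: "x \<in> A"
    obtain x0 x1 x2 where xe: "x = (x0,x1,x2)" by (cases x)
    show "x \<in> f -` C \<union> (- set_pmf p)"
    proof (cases "x \<in> set_pmf p")
      case True
      then have xs: "(x0,x1,x2) \<in> set_pmf p" using xe by simp
      have m1: "(x0,x1) \<in> set_pmf (q1 p)" using xs unfolding q1_def by force
      have m2: "(x0,x2) \<in> set_pmf (q2 p)" using xs unfolding q2_def by force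
      from xA xe inA[OF xs r, of n1 n2] have
        "\<not> (r * n1 * pmf (q1 p) (x0,x1) < Q x0) \<or> \<not> (r * n2 * pmf (q2 p) (x0,x2) < Q x0)
         \<or> \<not> (r * n1 * n2 * pmf p (x0,x1,x2) < Q x0)"
        by (auto simp: A_def Q_def)
      then have "x1 \<in> B1 x0 \<or> x2 \<in> B2 x0 \<or> (x1,x2) \<in> B3 x0"
        using m1 m2 xs unfolding B1_def B2_def B3_def fst_q1 fst_q2 Q_def by (auto simp: mult.assoc)
      then have "f x \<in> C" unfolding C_def f_def xe S1_def S2_def S3_def by force
      then show ?thesis by simp
    qed simp
  qed
  have "measure p A \<le> measure p (f -` C \<union> (- set_pmf p))"
    by (rule measure_pmf.finite_measure_mono[OF sub]) simp
  also have "\<dots> \<le> measure p (f -` C) + measure p (- set_pmf p)"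
    by (rule measure_Un_le) auto
  also have "measure p (- set_pmf p) = 0" by (simp add: measure_pmf_zero_iff)
  finally have muC: "measure p A \<le> measure (map_pmf f p) C" by simp
  have slice: "measure (pmf_of_set (UNIV :: ('y1 \<times> 'y2) set)) (Pair x0 -` C) \<le> 3 * r" for x0
  proof -
    have "Pair x0 -` C \<subseteq> (S1 x0 \<times> UNIV) \<union> (UNIV \<times> S2 x0) \<union> S3 x0"
      unfolding C_def by auto
    then have "card (Pair x0 -` C) \<le> card ((S1 x0 \<times> UNIV) \<union> (UNIV \<times> S2 x0) \<union> S3 x0)"
      by (intro card_mono) auto
    also have "\<dots> \<le> card (S1 x0 \<times> (UNIV::'y2 set)) + card ((UNIV::'y1 set) \<times> S2 x0) + card (S3 x0)"
      by (metis (no_types, lifting) add_le_mono card_Un_le le_refl order_trans)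
    also have "\<dots> \<le> card (B1 x0) * n2 + n1 * card (B2 x0) + card (B3 x0)"
      unfolding S1_def S2_def S3_def n1_def n2_def card_cartesian_product
      by (intro add_mono mult_le_mono card_image_le) (use c1 c2 c3 in auto)
    finally have "real (card (Pair x0 -` C)) \<le> real (card (B1 x0)) * n2 + n1 * real (card (B2 x0)) + real (card (B3 x0))"
      by (metis of_nat_add of_nat_le_iff of_nat_mult)
    also have "\<dots> \<le> r * n1 * n2 + n1 * (r * n2) + r * n1 * n2"
      using c1 c2 c3 by (intro add_mono mult_right_mono mult_left_mono) auto
    finally have "real (card (Pair x0 -` C)) \<le> 3 * r * (n1 * n2)" by (simp add: algebra_simps)
    then show ?thesis using n1 n2
      by (simp add: measure_pmf_of_set card_cartesian_product n1_def n2_def field_simps)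
  qed
  have "emeasure \<nu> C = (\<integral>\<^sup>+ x. indicator C x \<partial>\<nu>)" by simp
  also have "\<dots> = (\<integral>\<^sup>+ a. \<integral>\<^sup>+ b. indicator C (a, b) \<partial>pmf_of_set UNIV \<partial>map_pmf fst p)"
    unfolding \<nu>_def uniform_pair nn_integral_pair_pmf' ..
  also have "\<dots> = (\<integral>\<^sup>+ a. emeasure (pmf_of_set UNIV) (Pair a -` C) \<partial>map_pmf fst p)"
    by (intro nn_integral_cong) (simp add: nn_integral_indicator[symmetric] indicator_def)
  also have "\<dots> \<le> (\<integral>\<^sup>+ a. ennreal (3 * r) \<partial>map_pmf fst p)"
    by (intro nn_integral_mono) (use slice in \<open>simp add: measure_pmf.emeasure_eq_measure ennreal_leI\<close>)
  also have "\<dots> = ennreal (3 * r)" by simp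
  finally have "emeasure \<nu> C \<le> ennreal (3 * r)" .
  then have nuC: "measure \<nu> C \<le> 3 * r" using r
    by (simp add: measure_pmf.emeasure_eq_measure)
  have "measure p A - 3 * r \<le> measure (map_pmf f p) C - measure \<nu> C" using muC nuC by simp
  also have "\<dots> \<le> dXphi p \<phi>1 \<phi>2" unfolding dXphi_def f_def \<nu>_def by (rule stat_dist_ge)
  finally show ?thesis unfolding A_def n1_def n2_def .
qed



lemma card_PiE_eq:
  assumes D: "finite D" "a \<in> D" "b \<in> D" "a \<noteq> b"
  shows "card {f\<in>PiE D (\<lambda>_. UNIV::'y::finite set). f a = f b} * CARD('y) = card (PiE D (\<lambda>_. UNIV::'y set))"
proof -
  let ?P = "PiE D (\<lambda>_. UNIV::'y set)"
  let ?E = "{f\<in>?P. f a = f b}"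
  have "bij_betw (\<lambda>(f,y). f(a:=y)) (?E \<times> UNIV) ?P"
  proof (rule bij_betw_byWitness[where f' = "\<lambda>g. (g(a := g b), g a)"])
    show "\<forall>z\<in>?E \<times> UNIV. (\<lambda>g. (g(a := g b), g a)) ((\<lambda>(f,y). f(a:=y)) z) = z"
      using D by (auto simp: fun_upd_def fun_eq_iff)
    show "\<forall>g\<in>?P. (\<lambda>(f,y). f(a:=y)) ((\<lambda>g. (g(a := g b), g a)) g) = g" by auto
    show "(\<lambda>(f,y). f(a:=y)) ` (?E \<times> UNIV) \<subseteq> ?P" using D by (auto simp: PiE_iff extensional_def)
    show "(\<lambda>g. (g(a := g b), g a)) ` ?P \<subseteq> ?E \<times> UNIV" using D by (auto simp: PiE_iff extensional_def)
  qed
  then have "card (?E \<times> (UNIV::'y set)) = card ?P" by (rule bij_betw_same_card)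
  then show ?thesis by (simp add: card_cartesian_product)
qed

lemma sum_PiE_ind:
  assumes D: "finite D" "a \<in> D" "b \<in> D"
  shows "(\<Sum>f\<in>PiE D (\<lambda>_. UNIV::'y::finite set). (if f a = f b then 1 else 0::real))
     = card (PiE D (\<lambda>_. UNIV::'y set)) * (if a = b then 1 else 1 / CARD('y))"
proof (cases "a = b")
  case True then show ?thesis by simp
next
  case False
  have "(\<Sum>f\<in>PiE D (\<lambda>_. UNIV::'y::finite set). (if f a = f b then 1 else 0::real))
    = card {f\<in>PiE D (\<lambda>_. UNIV::'y set). f a = f b}"
    using D by (simp add: sum.If_cases finite_PiE Int_def conj_commute)
  also have "\<dots> = card (PiE D (\<lambda>_. UNIV::'y set)) / CARD('y)"
    using card_PiE_eq[OF D False, where 'y='y]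
    by (metis (no_types, lifting) nonzero_mult_div_cancel_right of_nat_eq_0_iff of_nat_mult zero_less_card_finite less_irrefl)
  finally show ?thesis using False by simp
qed

lemma exists_le_avg:
  assumes "finite S" "S \<noteq> {}" "(\<Sum>s\<in>S. f s) \<le> real (card S) * B"
  shows "\<exists>s\<in>S. f s \<le> (B::real)"
proof (rule ccontr)
  assume "\<not> ?thesis"
  then have "\<forall>s\<in>S. B < f s" by auto
  then have "(\<Sum>s\<in>S. B) < (\<Sum>s\<in>S. f s)" using assms by (intro sum_strict_mono) auto
  with assms show False by simp
qed



lemma core:
  fixes Gx :: "'x set" and g :: "'x \<Rightarrow> real" and \<beta> :: "'x \<Rightarrow> 'b" and \<gamma> :: "'x \<Rightarrow> 'c"
    and Fb :: "'b set" and Fc :: "'c set" and r Q :: real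
  assumes fin: "finite Gx" "finite Fb" "finite Fc" "\<beta> ` Gx \<subseteq> Fb" "\<gamma> ` Gx \<subseteq> Fc"
    and inj: "inj_on (\<lambda>x. (\<beta> x, \<gamma> x)) Gx"
    and g0: "\<And>x. x \<in> Gx \<Longrightarrow> g x \<ge> 0"
    and r: "r > 0"
    and b3: "\<And>x. x \<in> Gx \<Longrightarrow> g x \<le> Q / (r * (real CARD('u::finite) * real CARD('v::finite)))"
    and b1: "\<And>x. x \<in> Gx \<Longrightarrow> (\<Sum>x'\<in>{x'\<in>Gx. \<beta> x' = \<beta> x}. g x') \<le> Q / (r * CARD('u))"
    and b2: "\<And>x. x \<in> Gx \<Longrightarrow> (\<Sum>x'\<in>{x'\<in>Gx. \<gamma> x' = \<gamma> x}. g x') \<le> Q / (r * CARD('v))"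
    and mQ: "sum g Gx \<le> Q"
  defines "\<Phi> \<equiv> PiE Fb (\<lambda>_. UNIV::'u set) \<times> PiE Fc (\<lambda>_. UNIV::'v set)"
    and "a \<equiv> \<lambda>\<phi> y. \<Sum>x\<in>Gx. if (fst \<phi> (\<beta> x), snd \<phi> (\<gamma> x)) = y then g x else 0"
  shows "(\<Sum>\<phi>\<in>\<Phi>. \<Sum>y\<in>UNIV. \<bar>a \<phi> y - Q / (real CARD('u) * real CARD('v))\<bar>)
     \<le> card \<Phi> * (sqrt (3 * sum g Gx * Q / r) + (Q - sum g Gx))"
proof -
  define n1 :: real where "n1 = CARD('u)"
  define n2 :: real where "n2 = CARD('v)"
  define N where "N = n1 * n2"
  define m where "m = sum g Gx"
  define c where "c = Q / N"
  define K :: real where "K = card \<Phi>"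
  define \<psi> where "\<psi> = (\<lambda>(\<phi>::('b \<Rightarrow> 'u) \<times> ('c \<Rightarrow> 'v)) x. (fst \<phi> (\<beta> x), snd \<phi> (\<gamma> x)))"
  define k where "k x x' = (if \<beta> x = \<beta> x' then 1 else 1/n1) * (if \<gamma> x = \<gamma> x' then 1 else 1/n2)" for x x'
  have n1: "n1 \<ge> 1" and n2: "n2 \<ge> 1" by (auto simp: n1_def n2_def)
  have N: "N > 0" using n1 n2 by (simp add: N_def)
  have m0: "m \<ge> 0" using g0 by (simp add: m_def sum_nonneg)
  have Q0: "Q \<ge> m" using mQ by (simp add: m_def)
  have cardU: "card (UNIV :: ('u \<times> 'v) set) = N"
    by (simp add: N_def n1_def n2_def card_cartesian_product flip: UNIV_Times_UNIV)
  have finPhi: "finite \<Phi>" using fin by (simp add: \<Phi>_def finite_PiE)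
  have aeq: "a \<phi> y = (\<Sum>x\<in>Gx. if \<psi> \<phi> x = y then g x else 0)" for \<phi> y by (simp add: a_def \<psi>_def)
  have s1: "(\<Sum>y\<in>UNIV. a \<phi> y) = m" for \<phi>
    unfolding aeq m_def by (subst sum.swap) simp
  have s2: "(\<Sum>y\<in>UNIV. (a \<phi> y)\<^sup>2) = (\<Sum>x\<in>Gx. \<Sum>x'\<in>Gx. g x * g x' * (if \<psi> \<phi> x = \<psi> \<phi> x' then 1 else 0))" for \<phi>
  proof -
    have "(\<Sum>y\<in>UNIV. (a \<phi> y)\<^sup>2) = (\<Sum>y\<in>UNIV. \<Sum>x\<in>Gx. \<Sum>x'\<in>Gx. (if \<psi> \<phi> x = y then g x else 0) * (if \<psi> \<phi> x' = y then g x' else 0))"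
      unfolding aeq power2_eq_square sum_product ..
    also have "\<dots> = (\<Sum>x\<in>Gx. \<Sum>x'\<in>Gx. \<Sum>y\<in>UNIV. (if \<psi> \<phi> x = y then g x else 0) * (if \<psi> \<phi> x' = y then g x' else 0))"
      by (subst sum.swap) (rule sum.cong[OF refl], rule sum.swap)
    also have "\<dots> = (\<Sum>x\<in>Gx. \<Sum>x'\<in>Gx. g x * g x' * (if \<psi> \<phi> x = \<psi> \<phi> x' then 1 else 0))"
    proof (intro sum.cong refl)
      fix x x'
      have "(\<lambda>y. (if \<psi> \<phi> x = y then g x else 0) * (if \<psi> \<phi> x' = y then g x' else 0))
         = (\<lambda>y. if y = \<psi> \<phi> x then (if \<psi> \<phi> x' = \<psi> \<phi> x then g x * g x' else 0) else 0)" by (auto simp: fun_eq_iff)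
      then show "(\<Sum>y\<in>UNIV. (if \<psi> \<phi> x = y then g x else 0) * (if \<psi> \<phi> x' = y then g x' else 0))
        = g x * g x' * (if \<psi> \<phi> x = \<psi> \<phi> x' then 1 else 0)" by (simp only: sum.delta) auto
    qed
    finally show ?thesis .
  qed
  have s3: "(\<Sum>\<phi>\<in>\<Phi>. (if \<psi> \<phi> x = \<psi> \<phi> x' then 1 else 0::real)) = K * k x x'" if xx: "x \<in> Gx" "x' \<in> Gx" for x x'
  proof -
    have bx: "\<beta> x \<in> Fb" "\<beta> x' \<in> Fb" "\<gamma> x \<in> Fc" "\<gamma> x' \<in> Fc" using fin xx by auto
    have "(\<Sum>\<phi>\<in>\<Phi>. (if \<psi> \<phi> x = \<psi> \<phi> x' then 1 else 0::real))
      = (\<Sum>f1\<in>PiE Fb (\<lambda>_. UNIV::'u set). \<Sum>f2\<in>PiE Fc (\<lambda>_. UNIV::'v set).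
            (if f1 (\<beta> x) = f1 (\<beta> x') then 1 else 0) * (if f2 (\<gamma> x) = f2 (\<gamma> x') then 1 else 0::real))"
      unfolding \<Phi>_def sum.cartesian_product \<psi>_def by (intro sum.cong refl) auto
    also have "\<dots> = (\<Sum>f1\<in>PiE Fb (\<lambda>_. UNIV::'u set). (if f1 (\<beta> x) = f1 (\<beta> x') then 1 else 0)) *
         (\<Sum>f2\<in>PiE Fc (\<lambda>_. UNIV::'v set). (if f2 (\<gamma> x) = f2 (\<gamma> x') then 1 else 0::real))"
      by (simp add: sum_product)
    also have "\<dots> = K * k x x'"
      unfolding sum_PiE_ind[OF fin(2) bx(1,2)] sum_PiE_ind[OF fin(3) bx(3,4)] K_def k_def \<Phi>_def n1_def n2_def
      by (simp add: card_cartesian_product)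
    finally show ?thesis .
  qed
  have s4: "(\<Sum>x'\<in>Gx. g x' * k x x') \<le> 3 * Q / (r * N) + m / N" if x: "x \<in> Gx" for x
  proof -
    have kle: "k x x' \<le> (if x' = x then 1 else 0) + (if \<beta> x' = \<beta> x then 1 else 0) / n2
        + (if \<gamma> x' = \<gamma> x then 1 else 0) / n1 + 1 / N" if x': "x' \<in> Gx" for x'
    proof -
      have "\<beta> x' = \<beta> x \<Longrightarrow> \<gamma> x' = \<gamma> x \<Longrightarrow> x' = x" using inj x x' by (auto simp: inj_on_def)
      then show ?thesis using n1 n2 unfolding k_def N_def by (auto simp: field_simps)
    qed
    have "(\<Sum>x'\<in>Gx. g x' * k x x') \<le> (\<Sum>x'\<in>Gx. g x' * ((if x' = x then 1 else 0) + (if \<beta> x' = \<beta> x then 1 else 0) / n2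
        + (if \<gamma> x' = \<gamma> x then 1 else 0) / n1 + 1 / N))"
      by (intro sum_mono mult_left_mono kle g0)
    also have "\<dots> = g x + (\<Sum>x'\<in>{x'\<in>Gx. \<beta> x' = \<beta> x}. g x') / n2 + (\<Sum>x'\<in>{x'\<in>Gx. \<gamma> x' = \<gamma> x}. g x') / n1 + m / N"
    proof -
      have e1: "(\<Sum>x'\<in>Gx. g x' * (if x' = x then 1 else 0)) = g x" using fin(1) x
        by (simp add: if_distrib cong: if_cong)
      have e2: "(\<Sum>x'\<in>Gx. g x' * ((if \<beta> x' = \<beta> x then 1 else 0) / n2)) = (\<Sum>x'\<in>{x'\<in>Gx. \<beta> x' = \<beta> x}. g x') / n2"
      proof -
        have h: "(\<Sum>x'\<in>{x'\<in>Gx. \<beta> x' = \<beta> x}. g x') = (\<Sum>x'\<in>Gx. if \<beta> x' = \<beta> x then g x' else 0)"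
          by (rule sum.inter_filter[OF fin(1)])
        show ?thesis unfolding h sum_divide_distrib by (intro sum.cong) auto
      qed
      have e3: "(\<Sum>x'\<in>Gx. g x' * ((if \<gamma> x' = \<gamma> x then 1 else 0) / n1)) = (\<Sum>x'\<in>{x'\<in>Gx. \<gamma> x' = \<gamma> x}. g x') / n1"
      proof -
        have h: "(\<Sum>x'\<in>{x'\<in>Gx. \<gamma> x' = \<gamma> x}. g x') = (\<Sum>x'\<in>Gx. if \<gamma> x' = \<gamma> x then g x' else 0)"
          by (rule sum.inter_filter[OF fin(1)])
        show ?thesis unfolding h sum_divide_distrib by (intro sum.cong) auto
      qed
      have e4: "(\<Sum>x'\<in>Gx. g x' * (1 / N)) = m / N" by (simp add: m_def sum_divide_distrib[symmetric])
      show ?thesis unfolding distrib_left sum.distrib e1 e2 e3 e4 ..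
    qed
    also have "\<dots> \<le> Q / (r * N) + (Q / (r * n1)) / n2 + (Q / (r * n2)) / n1 + m / N"
      using b3[OF x] b1[OF x] b2[OF x] n1 n2 unfolding N_def n1_def n2_def
      by (intro add_mono divide_right_mono) auto
    also have "\<dots> = 3 * Q / (r * N) + m / N" using n1 n2 r by (simp add: N_def field_simps)
    finally show ?thesis .
  qed
  define V where "V = 3 * m * Q / r + (Q - m)\<^sup>2"
  have V0: "V \<ge> 0" using m0 Q0 r by (simp add: V_def)
  have e5: "(\<Sum>y\<in>UNIV. (a \<phi> y - c)\<^sup>2) = (\<Sum>y\<in>UNIV. (a \<phi> y)\<^sup>2) - 2 * c * m + N * c\<^sup>2" for \<phi>
  proof -
    have "(\<Sum>y\<in>UNIV. (a \<phi> y - c)\<^sup>2) = (\<Sum>y\<in>UNIV. (a \<phi> y)\<^sup>2 - 2 * c * a \<phi> y + c\<^sup>2)"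
      by (intro sum.cong refl) (simp add: power2_eq_square algebra_simps)
    also have "\<dots> = (\<Sum>y\<in>UNIV. (a \<phi> y)\<^sup>2) - 2 * c * (\<Sum>y\<in>UNIV. a \<phi> y) + N * c\<^sup>2"
      by (simp add: sum.distrib sum_subtractf sum_distrib_left cardU N_def n1_def n2_def)
    finally show ?thesis using s1 by simp
  qed
  have e6: "(\<Sum>\<phi>\<in>\<Phi>. \<Sum>y\<in>UNIV. (a \<phi> y)\<^sup>2) = K * (\<Sum>x\<in>Gx. g x * (\<Sum>x'\<in>Gx. g x' * k x x'))"
  proof -
    have "(\<Sum>\<phi>\<in>\<Phi>. \<Sum>y\<in>UNIV. (a \<phi> y)\<^sup>2) = (\<Sum>\<phi>\<in>\<Phi>. \<Sum>x\<in>Gx. \<Sum>x'\<in>Gx. g x * g x' * (if \<psi> \<phi> x = \<psi> \<phi> x' then 1 else 0))"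
      using s2 by simp
    also have "\<dots> = (\<Sum>x\<in>Gx. \<Sum>x'\<in>Gx. \<Sum>\<phi>\<in>\<Phi>. g x * g x' * (if \<psi> \<phi> x = \<psi> \<phi> x' then 1 else 0))"
      by (subst sum.swap) (rule sum.cong[OF refl], rule sum.swap)
    also have "\<dots> = (\<Sum>x\<in>Gx. \<Sum>x'\<in>Gx. g x * g x' * (K * k x x'))"
      by (intro sum.cong refl) (simp add: sum_distrib_left[symmetric] s3)
    also have "\<dots> = K * (\<Sum>x\<in>Gx. g x * (\<Sum>x'\<in>Gx. g x' * k x x'))"
      by (simp add: sum_distrib_left mult_ac)
    finally show ?thesis .
  qed
  have e7: "(\<Sum>x\<in>Gx. g x * (\<Sum>x'\<in>Gx. g x' * k x x')) \<le> (\<Sum>x\<in>Gx. g x * (3 * Q / (r * N) + m / N))"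
    by (intro sum_mono mult_left_mono s4 g0)
  have K0: "K \<ge> 0" by (simp add: K_def)
  have s5: "(\<Sum>\<phi>\<in>\<Phi>. \<Sum>y\<in>UNIV. (a \<phi> y - c)\<^sup>2) \<le> K / N * V"
  proof -
    have "(\<Sum>\<phi>\<in>\<Phi>. \<Sum>y\<in>UNIV. (a \<phi> y - c)\<^sup>2) = (\<Sum>\<phi>\<in>\<Phi>. \<Sum>y\<in>UNIV. (a \<phi> y)\<^sup>2) - K * (2 * c * m - N * c\<^sup>2)"
      unfolding e5 by (simp add: sum_subtractf sum.distrib K_def algebra_simps)
    also have "\<dots> \<le> K * (m * (3 * Q / (r * N) + m / N)) - K * (2 * c * m - N * c\<^sup>2)"
      unfolding e6 using e7 K0 by (simp add: sum_distrib_right[symmetric] m_def mult_left_mono)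
    also have "\<dots> = K / N * V" using N unfolding V_def c_def by (simp add: field_simps power2_eq_square)
    finally show ?thesis .
  qed
  define T where "T z = \<bar>a (fst z) (snd z) - c\<bar>" for z
  have e8: "(\<Sum>\<phi>\<in>\<Phi>. \<Sum>y\<in>UNIV. \<bar>a \<phi> y - c\<bar>) = (\<Sum>z\<in>\<Phi> \<times> UNIV. T z)"
    unfolding sum.cartesian_product T_def by (intro sum.cong) auto
  have e9: "(\<Sum>z\<in>\<Phi> \<times> UNIV. (T z)\<^sup>2) = (\<Sum>\<phi>\<in>\<Phi>. \<Sum>y\<in>UNIV. (a \<phi> y - c)\<^sup>2)"
    unfolding sum.cartesian_product T_def by (intro sum.cong) auto
  have e10: "(\<Sum>z\<in>\<Phi> \<times> (UNIV::('u\<times>'v) set). (1::real)\<^sup>2) = K * N"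
    using finPhi by (simp add: card_cartesian_product K_def N_def n1_def n2_def)
  have "(\<Sum>z\<in>\<Phi> \<times> UNIV. T z * 1)\<^sup>2 \<le> (\<Sum>z\<in>\<Phi> \<times> UNIV. (T z)\<^sup>2) * (\<Sum>z\<in>\<Phi> \<times> (UNIV::('u\<times>'v) set). (1::real)\<^sup>2)"
    by (rule Cauchy_Schwarz_ineq_sum)
  also have "\<dots> \<le> (K / N * V) * (K * N)" unfolding e9 e10
    by (rule mult_right_mono[OF s5]) (use K0 N in simp)
  also have "\<dots> = K\<^sup>2 * V" using N by (simp add: power2_eq_square field_simps)
  finally have "(\<Sum>z\<in>\<Phi> \<times> UNIV. T z)\<^sup>2 \<le> K\<^sup>2 * V" by simp
  then have "(\<Sum>z\<in>\<Phi> \<times> UNIV. T z) \<le> sqrt (K\<^sup>2 * V)" by (rule real_le_rsqrt)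
  also have "\<dots> = K * sqrt V" using K0 by (simp add: real_sqrt_mult)
  also have "\<dots> \<le> K * (sqrt (3 * m * Q / r) + (Q - m))"
  proof (rule mult_left_mono[OF _ K0])
    have "sqrt V \<le> sqrt (3 * m * Q / r) + sqrt ((Q - m)\<^sup>2)" unfolding V_def
      by (rule sqrt_add_le_add_sqrt) (use m0 Q0 r in auto)
    then show "sqrt V \<le> sqrt (3 * m * Q / r) + (Q - m)" using Q0 by simp
  qed
  finally show ?thesis unfolding e8[symmetric] c_def N_def n1_def n2_def K_def m_def .
qed



lemma finite_approx:
  fixes p :: "'x::countable pmf"
  assumes e: "\<epsilon> > 0"
  shows "\<exists>F. finite F \<and> measure p (- F) < \<epsilon>"
proof -
  define A where "A n = {x::'x. to_nat x < n}" for n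
  have finA: "finite (A n)" for n
    unfolding A_def by (rule finite_vimageI[of "{..<n}" to_nat, simplified vimage_def, simplified])
  have "(\<lambda>i. measure p (A i)) \<longlonglongrightarrow> measure p (\<Union>i. A i)"
    by (rule measure_pmf.finite_Lim_measure_incseq) (auto simp: incseq_def A_def)
  moreover have "(\<Union>i. A i) = UNIV" by (auto simp: A_def)
  ultimately have "(\<lambda>i. measure p (A i)) \<longlonglongrightarrow> 1" by simp
  then have "eventually (\<lambda>i. measure p (A i) > 1 - \<epsilon>) sequentially"
    using e by (intro order_tendstoD(1)) auto
  then obtain n where "measure p (A n) > 1 - \<epsilon>" by (auto simp: eventually_sequentially)
  moreover have "measure p (- A n) = 1 - measure p (A n)"
    using measure_pmf.prob_compl[of "A n" p] by (simp add: Compl_eq_Diff_UNIV)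
  ultimately show ?thesis using finA by (intro exI[of _ "A n"]) auto
qed

lemma powr_bound: "r > 0 \<Longrightarrow> sqrt (3 / r) / 2 = sqrt 3 / 2 * r powr (-1/2)"
  by (simp add: powr_minus_divide powr_half_sqrt real_sqrt_divide)

lemma goodD:
  fixes p :: "('a \<times> 'b \<times> 'c) pmf"
  assumes x: "x \<in> set_pmf p" and r: "r > 0"
    and nA: "(TX1 p x, TX2 p x, TX3 p x) \<in> Aset n1 n2 r"
  shows "r * n1 * pmf (q1 p) (fst x, fst (snd x)) < pmf (map_pmf fst p) (fst x) \<and>
      r * n2 * pmf (q2 p) (fst x, snd (snd x)) < pmf (map_pmf fst p) (fst x) \<and>
      r * n1 * n2 * pmf p x < pmf (map_pmf fst p) (fst x)"
proof -
  obtain x0 x1 x2 where xe: "x = (x0,x1,x2)" by (cases x)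
  show ?thesis using inA[of x0 x1 x2 p r n1 n2] x nA r unfolding xe by simp
qed

lemma part1:
  fixes p :: "('a::countable \<times> 'b::countable \<times> 'c::countable) pmf"
  assumes r: "r > 0" and e: "\<epsilon> > 0"
  shows "\<exists>(\<phi>1 :: 'b \<Rightarrow> 'y1::finite) (\<phi>2 :: 'c \<Rightarrow> 'y2::finite).
               dXphi p \<phi>1 \<phi>2
                 \<le> measure_pmf.prob p {x. (TX1 p x, TX2 p x, TX3 p x) \<notin> Aset CARD('y1) CARD('y2) r}
                   + sqrt 3 / 2 * r powr (-1/2) + \<epsilon>"
proof -
  define n1 :: real where "n1 = CARD('y1)"
  define n2 :: real where "n2 = CARD('y2)"
  have n1: "n1 \<ge> 1" and n2: "n2 \<ge> 1" by (auto simp: n1_def n2_def)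
  obtain F where F: "finite F" "measure p (- F) < \<epsilon>" using finite_approx[OF e] by blast
  define A where "A = {x. (TX1 p x, TX2 p x, TX3 p x) \<notin> Aset CARD('y1) CARD('y2) r}"
  define G where "G = {x\<in>F. x \<in> set_pmf p \<and> x \<notin> A}"
  have finG: "finite G" using F by (simp add: G_def)
  have PG: "measure p (- G) \<le> \<epsilon> + measure p A"
  proof -
    have "- G \<subseteq> (- F \<union> - set_pmf p) \<union> A" by (auto simp: G_def)
    then have "measure p (- G) \<le> measure p ((- F \<union> - set_pmf p) \<union> A)"
      by (rule measure_pmf.finite_measure_mono) simp
    also have "\<dots> \<le> measure p (- F \<union> - set_pmf p) + measure p A" by (rule measure_Un_le) auto
    also have "measure p (- F \<union> - set_pmf p) \<le> measure p (- F) + measure p (- set_pmf p)"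
      by (rule measure_Un_le) auto
    also have "measure p (- set_pmf p) = 0" by (simp add: measure_pmf_zero_iff)
    finally show ?thesis using F by simp
  qed
  define \<beta> :: "'a \<times> 'b \<times> 'c \<Rightarrow> 'b" where "\<beta> x = fst (snd x)" for x
  define \<gamma> :: "'a \<times> 'b \<times> 'c \<Rightarrow> 'c" where "\<gamma> x = snd (snd x)" for x
  define F0 where "F0 = fst ` G"
  define F1 where "F1 = \<beta> ` G"
  define F2 where "F2 = \<gamma> ` G"
  define Gx where "Gx x0 = {x\<in>G. fst x = x0}" for x0
  define Q where "Q x0 = pmf (map_pmf fst p) x0" for x0
  define m where "m x0 = sum (pmf p) (Gx x0)" for x0
  define \<Phi> where "\<Phi> = PiE F1 (\<lambda>_. UNIV::'y1 set) \<times> PiE F2 (\<lambda>_. UNIV::'y2 set)"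
  define a where "a x0 \<phi> y = (\<Sum>x\<in>Gx x0. if (fst \<phi> (\<beta> x), snd \<phi> (\<gamma> x)) = y then pmf p x else 0)"
    for x0 and \<phi> :: "('b \<Rightarrow> 'y1) \<times> ('c \<Rightarrow> 'y2)" and y
  define c where "c x0 = Q x0 / (n1 * n2)" for x0
  have finGx: "finite (Gx x0)" for x0 using finG by (simp add: Gx_def)
  have finF0: "finite F0" "finite F1" "finite F2" using finG by (auto simp: F0_def F1_def F2_def)
  have good: "r * n1 * pmf (q1 p) (x0, \<beta> x) < Q x0 \<and> r * n2 * pmf (q2 p) (x0, \<gamma> x) < Q x0 \<and>
      r * n1 * n2 * pmf p x < Q x0" if x: "x \<in> Gx x0" for x x0
  proof -
    have "x \<in> set_pmf p" "x \<notin> A" "fst x = x0" using x by (auto simp: Gx_def G_def)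
    then show ?thesis using goodD[of x p r "CARD('y1)" "CARD('y2)"] r
      by (auto simp: A_def Q_def n1_def n2_def \<beta>_def \<gamma>_def)
  qed
  have cx: "(\<Sum>\<phi>\<in>\<Phi>. \<Sum>y\<in>UNIV. \<bar>a x0 \<phi> y - c x0\<bar>) \<le> card \<Phi> * (sqrt (3 * m x0 * Q x0 / r) + (Q x0 - m x0))" for x0
  proof -
    have sub1: "\<beta> ` Gx x0 \<subseteq> F1" "\<gamma> ` Gx x0 \<subseteq> F2" by (auto simp: Gx_def F1_def F2_def)
    have inj: "inj_on (\<lambda>x. (\<beta> x, \<gamma> x)) (Gx x0)"
      by (auto simp: inj_on_def Gx_def \<beta>_def \<gamma>_def prod_eq_iff)
    have b3: "pmf p x \<le> Q x0 / (r * (real CARD('y1) * real CARD('y2)))" if x: "x \<in> Gx x0" for x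
      using good[OF x] r n1 n2 by (simp add: n1_def n2_def field_simps)
    have b1: "(\<Sum>x'\<in>{x'\<in>Gx x0. \<beta> x' = \<beta> x}. pmf p x') \<le> Q x0 / (r * CARD('y1))" if x: "x \<in> Gx x0" for x
    proof -
      have "(\<Sum>x'\<in>{x'\<in>Gx x0. \<beta> x' = \<beta> x}. pmf p x') \<le> pmf (q1 p) (x0, \<beta> x)"
        unfolding q1_def by (rule sum_pmf_le_map) (use finG in \<open>auto simp: Gx_def \<beta>_def\<close>)
      also have "\<dots> \<le> Q x0 / (r * CARD('y1))" using good[OF x] r n1 by (simp add: n1_def field_simps)
      finally show ?thesis .
    qed
    have b2: "(\<Sum>x'\<in>{x'\<in>Gx x0. \<gamma> x' = \<gamma> x}. pmf p x') \<le> Q x0 / (r * CARD('y2))" if x: "x \<in> Gx x0" for x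
    proof -
      have "(\<Sum>x'\<in>{x'\<in>Gx x0. \<gamma> x' = \<gamma> x}. pmf p x') \<le> pmf (q2 p) (x0, \<gamma> x)"
        unfolding q2_def by (rule sum_pmf_le_map) (use finG in \<open>auto simp: Gx_def \<gamma>_def\<close>)
      also have "\<dots> \<le> Q x0 / (r * CARD('y2))" using good[OF x] r n2 by (simp add: n2_def field_simps)
      finally show ?thesis .
    qed
    have mQ: "sum (pmf p) (Gx x0) \<le> Q x0"
      unfolding Q_def by (rule sum_pmf_le_map) (use finGx in \<open>auto simp: Gx_def\<close>)
    show ?thesis
      using core[where Gx = "Gx x0" and g = "pmf p" and \<beta> = \<beta> and \<gamma> = \<gamma> and Fb = F1 and Fc = F2 and r = r and Q = "Q x0",
          OF finGx finF0(2,3) sub1 inj pmf_nonneg r b3 b1 b2 mQ]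
      unfolding \<Phi>_def a_def c_def m_def n1_def n2_def by simp
  qed
  define R where "R = (\<Sum>x0\<in>F0. sqrt (3 * m x0 * Q x0 / r) + (Q x0 - m x0))"
  define W where "W \<phi> = (\<Sum>x0\<in>F0. \<Sum>y\<in>UNIV. \<bar>a x0 \<phi> y - c x0\<bar>)" for \<phi>
  have finPhi: "finite \<Phi>" "\<Phi> \<noteq> {}" using finF0 by (auto simp: \<Phi>_def finite_PiE PiE_eq_empty_iff)
  have "(\<Sum>\<phi>\<in>\<Phi>. W \<phi>) = (\<Sum>x0\<in>F0. \<Sum>\<phi>\<in>\<Phi>. \<Sum>y\<in>UNIV. \<bar>a x0 \<phi> y - c x0\<bar>)"
    unfolding W_def by (rule sum.swap)
  also have "\<dots> \<le> (\<Sum>x0\<in>F0. card \<Phi> * (sqrt (3 * m x0 * Q x0 / r) + (Q x0 - m x0)))"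
    by (intro sum_mono cx)
  also have "\<dots> = card \<Phi> * R" by (simp add: R_def sum_distrib_left)
  finally obtain \<phi> where \<phi>: "\<phi> \<in> \<Phi>" "W \<phi> \<le> R" using exists_le_avg[OF finPhi] by blast
  define \<phi>1 where "\<phi>1 = fst \<phi>"
  define \<phi>2 where "\<phi>2 = snd \<phi>"
  define f :: "'a \<times> 'b \<times> 'c \<Rightarrow> 'a \<times> 'y1 \<times> 'y2" where "f = (\<lambda>(x0, x1, x2). (x0, \<phi>1 x1, \<phi>2 x2))"
  define \<nu> where "\<nu> = pair_pmf (map_pmf fst p) (pair_pmf (pmf_of_set (UNIV::'y1 set)) (pmf_of_set (UNIV::'y2 set)))"
  have pmfnu: "pmf \<nu> (x0,y) = c x0" for x0 y
  proof -
    obtain y1 y2 where "y = (y1,y2)" by (cases y)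
    then show ?thesis by (simp add: \<nu>_def pmf_pair c_def Q_def n1_def n2_def)
  qed
  have mQ: "m x0 \<le> Q x0" "m x0 \<ge> 0" for x0
    unfolding Q_def m_def by (rule sum_pmf_le_map) (use finGx in \<open>auto simp: Gx_def sum_nonneg\<close>)
  have sa: "(\<Sum>y\<in>UNIV. a x0 \<phi> y) = m x0" for x0
    unfolding a_def m_def by (subst sum.swap) simp
  have sc: "(\<Sum>y\<in>(UNIV::('y1 \<times> 'y2) set). c x0) = Q x0" for x0
    using n1 n2 by (simp add: c_def n1_def n2_def card_cartesian_product flip: UNIV_Times_UNIV)
  have sc': "real CARD('y1) * real CARD('y2) * c x0 = Q x0" for x0
    using n1 n2 by (simp add: c_def n1_def n2_def)
  have SQ: "(\<Sum>x0\<in>F0. Q x0) \<le> 1"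
    unfolding Q_def using finF0(1) by (simp flip: measure_measure_pmf_finite)
  have keyC: "measure (map_pmf f p) C - measure \<nu> C \<le> measure p (- G) + sqrt (3 / r) / 2" for C
  proof -
    have "measure (map_pmf f p) C = measure p (f -` C)" by simp
    also have "\<dots> \<le> measure p ((f -` C \<inter> G) \<union> - G)" by (rule measure_pmf.finite_measure_mono) auto
    also have "\<dots> \<le> measure p (f -` C \<inter> G) + measure p (- G)" by (rule measure_Un_le) auto
    finally have mu0: "measure (map_pmf f p) C \<le> measure p (f -` C \<inter> G) + measure p (- G)" .
    have "measure p (f -` C \<inter> G) = (\<Sum>x\<in>G. if f x \<in> C then pmf p x else 0)"
    proof -
      have "f -` C \<inter> G = {x\<in>G. f x \<in> C}" by auto
      then show ?thesis using finG by (simp add: measure_measure_pmf_finite sum.inter_filter)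
    qed
    also have "\<dots> = (\<Sum>x0\<in>F0. \<Sum>x\<in>Gx x0. if f x \<in> C then pmf p x else 0)"
      unfolding Gx_def by (rule sum.group[symmetric]) (use finG finF0 in \<open>auto simp: F0_def\<close>)
    also have "\<dots> = (\<Sum>x0\<in>F0. \<Sum>y\<in>UNIV. if (x0,y) \<in> C then a x0 \<phi> y else 0)"
    proof (intro sum.cong refl)
      fix x0
      have "(\<Sum>y\<in>UNIV. if (x0,y) \<in> C then a x0 \<phi> y else 0)
          = (\<Sum>y\<in>UNIV. \<Sum>x\<in>Gx x0. if (x0,y) \<in> C then (if (fst \<phi> (\<beta> x), snd \<phi> (\<gamma> x)) = y then pmf p x else 0) else 0)"
        unfolding a_def by (intro sum.cong refl) auto
      also have "\<dots> = (\<Sum>x\<in>Gx x0. \<Sum>y\<in>UNIV. if (x0,y) \<in> C then (if (fst \<phi> (\<beta> x), snd \<phi> (\<gamma> x)) = y then pmf p x else 0) else 0)"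
        by (rule sum.swap)
      also have "\<dots> = (\<Sum>x\<in>Gx x0. if f x \<in> C then pmf p x else 0)"
      proof (intro sum.cong refl)
        fix x assume x: "x \<in> Gx x0"
        have fx: "f x = (x0, fst \<phi> (\<beta> x), snd \<phi> (\<gamma> x))" using x
          by (cases x) (auto simp: f_def Gx_def \<phi>1_def \<phi>2_def \<beta>_def \<gamma>_def)
        have "(\<lambda>y. if (x0,y) \<in> C then (if (fst \<phi> (\<beta> x), snd \<phi> (\<gamma> x)) = y then pmf p x else 0) else 0)
          = (\<lambda>y. if y = (fst \<phi> (\<beta> x), snd \<phi> (\<gamma> x)) then (if f x \<in> C then pmf p x else 0) else 0)"
          using fx by (auto simp: fun_eq_iff)
        then show "(\<Sum>y\<in>UNIV. if (x0,y) \<in> C then (if (fst \<phi> (\<beta> x), snd \<phi> (\<gamma> x)) = y then pmf p x else 0) else 0)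
          = (if f x \<in> C then pmf p x else 0)" by (simp only: sum.delta) simp
      qed
      finally show "(\<Sum>x\<in>Gx x0. if f x \<in> C then pmf p x else 0) = (\<Sum>y\<in>UNIV. if (x0,y) \<in> C then a x0 \<phi> y else 0)" ..
    qed
    finally have mu1: "measure p (f -` C \<inter> G) = (\<Sum>x0\<in>F0. \<Sum>y\<in>UNIV. if (x0,y) \<in> C then a x0 \<phi> y else 0)" .
    have "(\<Sum>x0\<in>F0. \<Sum>y\<in>UNIV. if (x0,y) \<in> C then c x0 else 0) = (\<Sum>z\<in>F0 \<times> UNIV. if z \<in> C then pmf \<nu> z else 0)"
      unfolding sum.cartesian_product by (intro sum.cong refl) (auto simp: pmfnu)
    also have "\<dots> = measure \<nu> (C \<inter> (F0 \<times> UNIV))"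
    proof -
      have "C \<inter> (F0 \<times> UNIV) = {z\<in>F0 \<times> UNIV. z \<in> C}" by auto
      then show ?thesis using finF0 by (simp add: measure_measure_pmf_finite sum.inter_filter)
    qed
    also have "\<dots> \<le> measure \<nu> C" by (rule measure_pmf.finite_measure_mono) auto
    finally have nu1: "(\<Sum>x0\<in>F0. \<Sum>y\<in>UNIV. if (x0,y) \<in> C then c x0 else 0) \<le> measure \<nu> C" .
    have "measure (map_pmf f p) C - measure \<nu> C \<le> measure p (- G) +
        ((\<Sum>x0\<in>F0. \<Sum>y\<in>UNIV. if (x0,y) \<in> C then a x0 \<phi> y else 0) - (\<Sum>x0\<in>F0. \<Sum>y\<in>UNIV. if (x0,y) \<in> C then c x0 else 0))"
      using mu0 mu1 nu1 by linarith
    also have "(\<Sum>x0\<in>F0. \<Sum>y\<in>UNIV. if (x0,y) \<in> C then a x0 \<phi> y else 0) - (\<Sum>x0\<in>F0. \<Sum>y\<in>UNIV. if (x0,y) \<in> C then c x0 else 0)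
        = (\<Sum>x0\<in>F0. \<Sum>y\<in>UNIV. if (x0,y) \<in> C then a x0 \<phi> y - c x0 else 0)"
      by (simp add: sum_subtractf[symmetric] if_distrib cong: if_cong)
    also have "\<dots> \<le> (\<Sum>x0\<in>F0. \<Sum>y\<in>UNIV. (\<bar>a x0 \<phi> y - c x0\<bar> + (a x0 \<phi> y - c x0)) / 2)"
      by (intro sum_mono) auto
    also have "\<dots> = (W \<phi> + (\<Sum>x0\<in>F0. m x0 - Q x0)) / 2"
      unfolding W_def by (simp add: sum_divide_distrib[symmetric] sum.distrib sum_subtractf sa sc sc')
    also have "\<dots> \<le> (R + (\<Sum>x0\<in>F0. m x0 - Q x0)) / 2" using \<phi>(2) by simp
    also have "\<dots> = (\<Sum>x0\<in>F0. sqrt (3 * m x0 * Q x0 / r)) / 2"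
      unfolding R_def by (simp add: sum.distrib sum_subtractf)
    also have "\<dots> \<le> (\<Sum>x0\<in>F0. Q x0 * sqrt (3 / r)) / 2"
    proof -
      have "sqrt (3 * m x0 * Q x0 / r) \<le> Q x0 * sqrt (3 / r)" for x0
      proof -
        have "3 * m x0 * Q x0 / r \<le> (Q x0)\<^sup>2 * (3 / r)"
          using mQ[of x0] r by (simp add: power2_eq_square field_simps mult_left_mono)
        then have "sqrt (3 * m x0 * Q x0 / r) \<le> sqrt ((Q x0)\<^sup>2 * (3 / r))" by (rule real_sqrt_le_mono)
        also have "\<dots> = Q x0 * sqrt (3 / r)" unfolding real_sqrt_mult using mQ[of x0] by simp
        finally show ?thesis .
      qed
      then show ?thesis by (intro divide_right_mono sum_mono) auto
    qed
    also have "\<dots> = (\<Sum>x0\<in>F0. Q x0) * sqrt (3 / r) / 2" by (simp add: sum_distrib_right)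
    also have "\<dots> \<le> 1 * sqrt (3 / r) / 2" using SQ r by (intro divide_right_mono mult_right_mono) auto
    finally show ?thesis by simp
  qed
  have "dXphi p \<phi>1 \<phi>2 \<le> measure p (- G) + sqrt (3 / r) / 2"
    unfolding dXphi_def by (rule stat_dist_le) (use keyC in \<open>simp add: f_def \<nu>_def\<close>)
  also have "\<dots> \<le> measure p A + sqrt 3 / 2 * r powr (-1/2) + \<epsilon>"
    using PG powr_bound[OF r] by simp
  finally show ?thesis unfolding A_def by blast
qed


theorem theorem6:
  fixes p :: "('a::countable \<times> 'b::countable \<times> 'c::countable) pmf"
  shows "(\<forall>r \<epsilon>. r > 1 \<longrightarrow> \<epsilon> > 0 \<longrightarrow>
            (\<exists>(\<phi>1 :: 'b \<Rightarrow> 'y1::finite) (\<phi>2 :: 'c \<Rightarrow> 'y2::finite).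
               dXphi p \<phi>1 \<phi>2
                 \<le> measure_pmf.prob p {x. (TX1 p x, TX2 p x, TX3 p x) \<notin> Aset CARD('y1) CARD('y2) r}
                   + sqrt 3 / 2 * r powr (-1/2) + \<epsilon>))
       \<and> (\<forall>(\<phi>1 :: 'b \<Rightarrow> 'y1) (\<phi>2 :: 'c \<Rightarrow> 'y2) r. 0 < r \<longrightarrow> r < 1 \<longrightarrow>
            dXphi p \<phi>1 \<phi>2
              \<ge> measure_pmf.prob p {x. (TX1 p x, TX2 p x, TX3 p x) \<notin> Aset CARD('y1) CARD('y2) r}
                - 3 * r)"
proof (intro conjI allI impI)
  fix r \<epsilon> :: real assume "r > 1" "\<epsilon> > 0"
  then show "\<exists>(\<phi>1 :: 'b \<Rightarrow> 'y1::finite) (\<phi>2 :: 'c \<Rightarrow> 'y2::finite).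
               dXphi p \<phi>1 \<phi>2
                 \<le> measure_pmf.prob p {x. (TX1 p x, TX2 p x, TX3 p x) \<notin> Aset CARD('y1) CARD('y2) r}
                   + sqrt 3 / 2 * r powr (-1/2) + \<epsilon>"
    using part1[of r \<epsilon> p] by simp
next
  fix \<phi>1 :: "'b \<Rightarrow> 'y1" and \<phi>2 :: "'c \<Rightarrow> 'y2" and r :: real
  assume "0 < r" "r < 1"
  then show "dXphi p \<phi>1 \<phi>2
              \<ge> measure_pmf.prob p {x. (TX1 p x, TX2 p x, TX3 p x) \<notin> Aset CARD('y1) CARD('y2) r}
                - 3 * r" using part2[of r p \<phi>1 \<phi>2] by simp
qed

end
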